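(* Let $\Delta x>0$, let $a=(a_j)_{j\in\mathbb Z}$ be a sequence in $\ell^2_\Delta(\mathbb Z)$ and $\gamma\in[0,\frac12)$. Then $$\Big\langle D_+D_+D_-(a),D\Big(\frac{a^2}{2}\Big)\Big\rangle\le\frac{\Delta x^{\frac12-\gamma}+\|a\|_{\ell^\infty}+9\|a\|^2_{\ell^\infty}\Delta x^{\gamma-\frac12}}{2}\|D_+D_-(a)\|^2_{\ell^2_\Delta}+\|a\|_{\ell^\infty}\|D_+D(a)\|^2_{\ell^2_\Delta}.$$
   Context: For sequences: $D_+(a)_j=(a_{j+1}-a_j)/\Delta x$, $D_-(a)_j=(a_j-a_{j-1})/\Delta x$, $D=\frac12(D_++D_-)$; $a^2$ is componentwise; $\langle a,b\rangle=\Delta x\sum_ja_jb_j$, $\|a\|_{\ell^2_\Delta}=\langle a,a\rangle^{1/2}$, $\|a\|_{\ell^\infty}=\sup_j|a_j|$. *)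

theory Defs
  imports "HOL-Analysis.Analysis"
begin

definition Dp :: "real \<Rightarrow> (int \<Rightarrow> real) \<Rightarrow> (int \<Rightarrow> real)" where
  "Dp dx a = (\<lambda>j. (a (j + 1) - a j) / dx)"

definition Dm :: "real \<Rightarrow> (int \<Rightarrow> real) \<Rightarrow> (int \<Rightarrow> real)" where
  "Dm dx a = (\<lambda>j. (a j - a (j - 1)) / dx)"

definition Dc :: "real \<Rightarrow> (int \<Rightarrow> real) \<Rightarrow> (int \<Rightarrow> real)" where
  "Dc dx a = (\<lambda>j. (Dp dx a j + Dm dx a j) / 2)"

definition inner_d :: "real \<Rightarrow> (int \<Rightarrow> real) \<Rightarrow> (int \<Rightarrow> real) \<Rightarrow> real" where
  "inner_d dx a b = dx * (\<Sum>\<^sub>\<infinity>j\<in>UNIV. a j * b j)"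

definition norm_l2d :: "real \<Rightarrow> (int \<Rightarrow> real) \<Rightarrow> real" where
  "norm_l2d dx a = sqrt (inner_d dx a a)"

definition norm_linf :: "(int \<Rightarrow> real) \<Rightarrow> real" where
  "norm_linf a = (SUP j. \<bar>a j\<bar>)"

definition in_l2d :: "(int \<Rightarrow> real) \<Rightarrow> bool" where
  "in_l2d a \<longleftrightarrow> (\<lambda>j. (a j)\<^sup>2) summable_on UNIV"

end

theory Submission
  imports Defs
begin



lemma gen_bound:
  fixes x y s K :: real
  assumes "\<bar>s\<bar> \<le> K"
  shows "x * y * s \<le> K * (x\<^sup>2 + y\<^sup>2) / 2"
proof -
  have K0: "K \<ge> 0" using assms by linarith
  have "x * y * s \<le> \<bar>x * y\<bar> * \<bar>s\<bar>" by (metis abs_ge_self abs_mult)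
  also have "\<dots> \<le> \<bar>x * y\<bar> * K" by (rule mult_left_mono[OF assms]) simp
  also have "\<dots> \<le> (x\<^sup>2 + y\<^sup>2) / 2 * K"
  proof (rule mult_right_mono[OF _ K0])
    have "0 \<le> (\<bar>x\<bar> - \<bar>y\<bar>)\<^sup>2" by simp
    then show "\<bar>x * y\<bar> \<le> (x\<^sup>2 + y\<^sup>2) / 2"
      by (simp add: power2_eq_square abs_mult algebra_simps)
  qed
  finally show ?thesis by (simp add: algebra_simps)
qed

lemma div_le: "(X::real) \<le> k * Y \<Longrightarrow> 0 < k \<Longrightarrow> X / k \<le> Y"
  by (simp add: pos_divide_le_eq mult.commute)

lemma pw:
  fixes x0 x1 x2 x3 x4 M :: real
  assumes h0: "\<bar>x0\<bar> \<le> M" and h1: "\<bar>x1\<bar> \<le> M" and h2: "\<bar>x2\<bar> \<le> M"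
    and h3: "\<bar>x3\<bar> \<le> M" and h4: "\<bar>x4\<bar> \<le> M"
  defines "b \<equiv> x3 - 2*x2 + x1" and "b1 \<equiv> x4 - 2*x3 + x2" and "b0 \<equiv> x2 - 2*x1 + x0"
    and "c \<equiv> (x3\<^sup>2 - x1\<^sup>2)/4" and "c0 \<equiv> (x2\<^sup>2 - x0\<^sup>2)/4"
    and "e \<equiv> (x4 - x3 - x2 + x1)/2" and "e0 \<equiv> (x3 - x2 - x1 + x0)/2"
    and "p \<equiv> x3 - x2" and "p0 \<equiv> x2 - x1"
  shows "(b1 - b) * c \<le> 11/6*M*b\<^sup>2 + M/2*e\<^sup>2
     + ((b1 * c - p^3/3 - M/4*b\<^sup>2 - M/2*e\<^sup>2) - (b * c0 - p0^3/3 - M/4*b0\<^sup>2 - M/2*e0\<^sup>2))"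
proof -
  define T1 where "T1 = b * b * (-(x3 + 2*x2 + x1)) / 8"
  define T2 where "T2 = b * b0 * (-(x2 + 2*x1 + x0)) / 8"
  define T3 where "T3 = b * b * b / 12"
  define T4 where "T4 = b * e0 * ((x3 - x1)/2 + (x2 - x0)/2) / 2"
  have eq: "(b1 - b) * c = (b1 * c - b * c0) - (p^3 - p0^3)/3 + T1 + T2 + T3 + T4"
    unfolding T1_def T2_def T3_def T4_def b_def b1_def b0_def c_def c0_def e0_def p_def p0_def
    by (simp add: field_simps power2_eq_square power3_eq_cube)
  have a1: "\<bar>-(x3 + 2*x2 + x1)\<bar> \<le> 4*M" using h1 h2 h3 by arith
  have a2: "\<bar>-(x2 + 2*x1 + x0)\<bar> \<le> 4*M" using h0 h1 h2 by arith
  have a3: "\<bar>b\<bar> \<le> 4*M" using h1 h2 h3 unfolding b_def by arith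
  have a4: "\<bar>(x3 - x1)/2 + (x2 - x0)/2\<bar> \<le> 2*M" using h0 h1 h2 h3 unfolding abs_le_iff by (auto simp: field_simps)
  have g1: "b * b * (-(x3 + 2*x2 + x1)) \<le> 4*M * (b\<^sup>2 + b\<^sup>2) / 2" by (rule gen_bound[OF a1])
  have g2: "b * b0 * (-(x2 + 2*x1 + x0)) \<le> 4*M * (b\<^sup>2 + b0\<^sup>2) / 2" by (rule gen_bound[OF a2])
  have g3: "b * b * b \<le> 4*M * (b\<^sup>2 + b\<^sup>2) / 2" by (rule gen_bound[OF a3])
  have g4: "b * e0 * ((x3 - x1)/2 + (x2 - x0)/2) \<le> 2*M * (b\<^sup>2 + e0\<^sup>2) / 2"
    by (rule gen_bound[OF a4])
  have "T1 \<le> 1/2 * (M * b\<^sup>2)"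
  proof -
    have e: "4*M * (b\<^sup>2 + b\<^sup>2) / 2 = 8 * (1/2 * (M * b\<^sup>2))" by (simp add: algebra_simps)
    show ?thesis unfolding T1_def by (rule div_le[OF g1[unfolded e]]) simp
  qed
  moreover have "T2 \<le> 1/4 * (M * b\<^sup>2) + 1/4 * (M * b0\<^sup>2)"
  proof -
    have e: "4*M * (b\<^sup>2 + b0\<^sup>2) / 2 = 8 * (1/4 * (M * b\<^sup>2) + 1/4 * (M * b0\<^sup>2))" by (simp add: algebra_simps)
    show ?thesis unfolding T2_def by (rule div_le[OF g2[unfolded e]]) simp
  qed
  moreover have "T3 \<le> 1/3 * (M * b\<^sup>2)"
  proof -
    have e: "4*M * (b\<^sup>2 + b\<^sup>2) / 2 = 12 * (1/3 * (M * b\<^sup>2))" by (simp add: algebra_simps)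
    show ?thesis unfolding T3_def by (rule div_le[OF g3[unfolded e]]) simp
  qed
  moreover have "T4 \<le> 1/2 * (M * b\<^sup>2) + 1/2 * (M * e0\<^sup>2)"
  proof -
    have e: "2*M * (b\<^sup>2 + e0\<^sup>2) / 2 = 2 * (1/2 * (M * b\<^sup>2) + 1/2 * (M * e0\<^sup>2))" by (simp add: algebra_simps)
    show ?thesis unfolding T4_def by (rule div_le[OF g4[unfolded e]]) simp
  qed
  ultimately have fin: "(b1 - b) * c \<le> 19/12 * (M * b\<^sup>2) + 1/4 * (M * b0\<^sup>2)
     + 1/2 * (M * e0\<^sup>2) + (b1 * c - b * c0) - (p^3 - p0^3)/3"
    using eq by linarith
  have "11/6*M*b\<^sup>2 + M/2*e\<^sup>2
     + ((b1 * c - p^3/3 - M/4*b\<^sup>2 - M/2*e\<^sup>2) - (b * c0 - p0^3/3 - M/4*b0\<^sup>2 - M/2*e0\<^sup>2))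
     = 19/12 * (M * b\<^sup>2) + 1/4 * (M * b0\<^sup>2)
     + 1/2 * (M * e0\<^sup>2) + (b1 * c - b * c0) - (p^3 - p0^3)/3"
    by (simp add: field_simps)
  then show ?thesis using fin by linarith
qed




lemma bij_shift: "bij_betw (\<lambda>j::int. j + k) UNIV UNIV"
  by (rule bij_betwI[where g="\<lambda>j. j - k"]) auto

lemma summable_shift:
  fixes f :: "int \<Rightarrow> real"
  assumes "f summable_on UNIV"
  shows "(\<lambda>j. f (j + k)) summable_on UNIV"
  using summable_on_reindex_bij_betw[OF bij_shift, of f k] assms by simp

lemma infsum_shift:
  fixes f :: "int \<Rightarrow> real"
  shows "infsum (\<lambda>j. f (j + k)) UNIV = infsum f UNIV"
  using infsum_reindex_bij_betw[OF bij_shift, of f k] by simp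

lemma l2_shift: "in_l2d a \<Longrightarrow> in_l2d (\<lambda>j. a (j + k))"
  unfolding in_l2d_def by (rule summable_shift[where f="\<lambda>j. (a j)\<^sup>2"])

lemma l2_prod:
  assumes "in_l2d f" "in_l2d g"
  shows "(\<lambda>j. f j * g j) summable_on UNIV"
proof -
  have "(\<lambda>j. norm (f j * f j)) summable_on UNIV" "(\<lambda>j. norm (g j * g j)) summable_on UNIV"
    using assms unfolding in_l2d_def summable_on_iff_abs_summable_on_real[symmetric]
    by (simp_all add: power2_eq_square)
  then have "(\<lambda>j. norm (f j * g j)) summable_on UNIV" by (rule abs_summable_product)
  then show ?thesis using summable_on_iff_abs_summable_on_real by blast
qed

lemma l2_cmult: "in_l2d f \<Longrightarrow> in_l2d (\<lambda>j. c * f j)"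
  unfolding in_l2d_def using summable_on_cmult_right[of "\<lambda>j. (f j)\<^sup>2" UNIV "c\<^sup>2"]
  by (simp add: power_mult_distrib)

lemma l2_add:
  assumes "in_l2d f" "in_l2d g"
  shows "in_l2d (\<lambda>j. f j + g j)"
proof -
  have s: "(\<lambda>j. (f j)\<^sup>2 + (2 * (f j * g j) + (g j)\<^sup>2)) summable_on UNIV"
    using assms l2_prod[OF assms] unfolding in_l2d_def
    by (intro summable_on_add summable_on_cmult_right) auto
  have "(\<lambda>j. (f j + g j)\<^sup>2) = (\<lambda>j. (f j)\<^sup>2 + (2 * (f j * g j) + (g j)\<^sup>2))"
    by (auto simp: power2_eq_square algebra_simps)
  then show ?thesis using s unfolding in_l2d_def by simp
qed

lemma l2_diff:
  assumes "in_l2d f" "in_l2d g"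
  shows "in_l2d (\<lambda>j. f j - g j)"
  using l2_add[OF assms(1) l2_cmult[OF assms(2), of "-1"]] by simp

lemma l2_bmult:
  assumes "in_l2d f" and "\<And>j. \<bar>g j\<bar> \<le> K"
  shows "in_l2d (\<lambda>j. g j * f j)"
  unfolding in_l2d_def
proof (rule summable_on_comparison_test)
  show "(\<lambda>j. K\<^sup>2 * (f j)\<^sup>2) summable_on UNIV"
    using assms(1) unfolding in_l2d_def by (rule summable_on_cmult_right)
  fix j
  have "(g j)\<^sup>2 \<le> K\<^sup>2" using assms(2)[of j]
    using power_mono[OF assms(2)[of j] abs_ge_zero, of 2] by simp
  then show "(g j * f j)\<^sup>2 \<le> K\<^sup>2 * (f j)\<^sup>2"
    by (simp add: power_mult_distrib mult_right_mono)
  show "0 \<le> (g j * f j)\<^sup>2" by simp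
qed

lemma l2_bound:
  assumes "in_l2d a"
  shows "\<bar>a j\<bar> \<le> sqrt (infsum (\<lambda>j. (a j)\<^sup>2) UNIV)"
proof -
  have "infsum (\<lambda>j. (a j)\<^sup>2) {j} \<le> infsum (\<lambda>j. (a j)\<^sup>2) UNIV"
    by (rule infsum_mono_neutral) (use assms in_l2d_def in auto)
  then have "(a j)\<^sup>2 \<le> infsum (\<lambda>j. (a j)\<^sup>2) UNIV" by simp
  then have "sqrt ((a j)\<^sup>2) \<le> sqrt (infsum (\<lambda>j. (a j)\<^sup>2) UNIV)" by (rule real_sqrt_le_mono)
  then show ?thesis by simp
qed


lemma l2_shiftm: "in_l2d a \<Longrightarrow> in_l2d (\<lambda>j. a (j - k))"
  using l2_shift[of a "-k"] by simp

lemma l2_div: "in_l2d f \<Longrightarrow> in_l2d (\<lambda>j. f j / c)"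
  using l2_cmult[of f "inverse c"] by (simp add: divide_inverse mult.commute)

lemma l2_sq_shift:
  assumes "in_l2d a" "\<And>j. \<bar>a j\<bar> \<le> M"
  shows "in_l2d (\<lambda>j. (a (j + k))\<^sup>2)"
  using l2_bmult[OF l2_shift[OF assms(1), of k], of "\<lambda>j. a (j + k)" M] assms(2)
  by (simp add: power2_eq_square)

lemma l2_sq_shiftm:
  assumes "in_l2d a" "\<And>j. \<bar>a j\<bar> \<le> M"
  shows "in_l2d (\<lambda>j. (a (j - k))\<^sup>2)"
  using l2_sq_shift[OF assms, of "-k"] by simp

lemma summable_diff:
  fixes f g :: "int \<Rightarrow> real"
  assumes "f summable_on A" "g summable_on A"
  shows "(\<lambda>x. f x - g x) summable_on A"
  using summable_on_add[OF assms(1), of "\<lambda>x. - g x"] assms(2) summable_on_uminus[of g A]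
  by simp

lemma infsum_diff_r:
  fixes f g :: "int \<Rightarrow> real"
  assumes "f summable_on A" "g summable_on A"
  shows "infsum (\<lambda>x. f x - g x) A = infsum f A - infsum g A"
  using infsum_add[OF assms(1), of "\<lambda>x. - g x"] assms(2) summable_on_uminus[of g A]
    infsum_uminus[of g A]
  by simp

definition rb :: "(int \<Rightarrow> real) \<Rightarrow> int \<Rightarrow> real" where
  "rb a j = a (j + 1) - 2 * a j + a (j - 1)"
definition rc :: "(int \<Rightarrow> real) \<Rightarrow> int \<Rightarrow> real" where
  "rc a j = ((a (j + 1))\<^sup>2 - (a (j - 1))\<^sup>2) / 4"
definition re :: "(int \<Rightarrow> real) \<Rightarrow> int \<Rightarrow> real" where
  "re a j = (a (j + 2) - a (j + 1) - a j + a (j - 1)) / 2"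
definition rp :: "(int \<Rightarrow> real) \<Rightarrow> int \<Rightarrow> real" where
  "rp a j = a (j + 1) - a j"
definition HH :: "real \<Rightarrow> (int \<Rightarrow> real) \<Rightarrow> int \<Rightarrow> real" where
  "HH M a j = rb a j * rc a (j - 1) - (rp a (j - 1))^3 / 3 - M/4 * (rb a (j - 1))\<^sup>2
     - M/2 * (re a (j - 1))\<^sup>2"

lemma pw_seq:
  assumes "\<And>k. \<bar>a k\<bar> \<le> M"
  shows "(rb a (j + 1) - rb a j) * rc a j \<le> 11/6*M*(rb a j)\<^sup>2 + M/2*(re a j)\<^sup>2
    + (HH M a (j + 1) - HH M a j)"
proof -
  have idx: "j + 1 - 1 = j" "j + 1 + 1 = j + 2" "j - 1 + 1 = j" "j - 1 - 1 = j - 2"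
    "j - 1 + 2 = j + 1" by simp_all
  show ?thesis
    unfolding HH_def rb_def rc_def re_def rp_def idx
    using pw[of "a (j - 2)" M "a (j - 1)" "a j" "a (j + 1)" "a (j + 2)"] assms by simp
qed

lemma key:
  assumes l2: "in_l2d a" and bnd: "\<And>k. \<bar>a k\<bar> \<le> M"
  shows "infsum (\<lambda>j. (rb a (j + 1) - rb a j) * rc a j) UNIV
     \<le> 11/6*M * infsum (\<lambda>j. (rb a j)\<^sup>2) UNIV + M/2 * infsum (\<lambda>j. (re a j)\<^sup>2) UNIV"
proof -
  have Lrb: "in_l2d (rb a)" unfolding rb_def
    by (intro l2_add l2_diff l2_cmult l2_shift l2_shiftm l2)
  have Lre: "in_l2d (re a)" unfolding re_def
    by (intro l2_div l2_add l2_diff l2_cmult l2_shift l2_shiftm l2)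
  have Lrc: "in_l2d (rc a)" unfolding rc_def
    by (intro l2_div l2_diff l2_sq_shift[OF l2 bnd] l2_sq_shiftm[OF l2 bnd])
  have Lrp: "in_l2d (rp a)" unfolding rp_def
    by (intro l2_diff l2_shift l2)
  have rpb: "\<bar>rp a j\<bar> \<le> 2 * M" for j
    using bnd[of "j+1"] bnd[of j] unfolding rp_def by linarith
  define F where "F = (\<lambda>j. (rb a (j + 1) - rb a j) * rc a j)"
  define G where "G = (\<lambda>j. 11/6*M*(rb a j)\<^sup>2 + M/2*(re a j)\<^sup>2)"
  define H where "H = HH M a"
  have SF: "F summable_on UNIV" unfolding F_def
    by (intro l2_prod l2_diff Lrc l2_shift[OF Lrb] Lrb)
  have Sb: "(\<lambda>j. (rb a j)\<^sup>2) summable_on UNIV" using Lrb unfolding in_l2d_def .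
  have Se: "(\<lambda>j. (re a j)\<^sup>2) summable_on UNIV" using Lre unfolding in_l2d_def .
  have SG: "G summable_on UNIV" unfolding G_def
    by (intro summable_on_add summable_on_cmult_right Sb Se)
  have S1: "(\<lambda>j. rb a j * rc a (j - 1)) summable_on UNIV"
    by (intro l2_prod Lrb l2_shiftm[OF Lrc, of 1, simplified])
  have Lrp1: "in_l2d (\<lambda>j. rp a (j - 1))" using l2_shiftm[OF Lrp, of 1] by simp
  have "in_l2d (\<lambda>j. rp a (j - 1) * rp a (j - 1))"
    by (rule l2_bmult[OF Lrp1, of "\<lambda>j. rp a (j - 1)" "2*M"]) (rule rpb)
  then have S2': "(\<lambda>j. rp a (j - 1) * (rp a (j - 1) * rp a (j - 1))) summable_on UNIV"
    using l2_prod[OF Lrp1] by blast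
  have S2: "(\<lambda>j. (rp a (j - 1))^3 / 3) summable_on UNIV"
    using summable_on_cmult_right[OF S2', of "1/3"] by (simp add: power3_eq_cube mult.assoc)
  have S3: "(\<lambda>j. M/4 * (rb a (j - 1))\<^sup>2) summable_on UNIV"
    using summable_on_cmult_right[OF summable_shift[OF Sb, of "-1"], of "M/4"] by simp
  have S4: "(\<lambda>j. M/2 * (re a (j - 1))\<^sup>2) summable_on UNIV"
    using summable_on_cmult_right[OF summable_shift[OF Se, of "-1"], of "M/2"] by simp
  have SH: "H summable_on UNIV" unfolding H_def HH_def
    by (intro summable_diff S1 S2 S3 S4)
  have SH1: "(\<lambda>j. H (j + 1)) summable_on UNIV" by (rule summable_shift[OF SH])
  have "infsum F UNIV \<le> infsum (\<lambda>j. G j + (H (j + 1) - H j)) UNIV"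
    by (rule infsum_mono[OF SF summable_on_add[OF SG summable_diff[OF SH1 SH]]])
       (use pw_seq[OF bnd] in \<open>simp add: F_def G_def H_def\<close>)
  also have "\<dots> = infsum G UNIV + (infsum (\<lambda>j. H (j + 1)) UNIV - infsum H UNIV)"
    using infsum_add[OF SG summable_diff[OF SH1 SH]] infsum_diff_r[OF SH1 SH] by simp
  also have "\<dots> = infsum G UNIV" using infsum_shift[of H 1] by simp
  also have "\<dots> = 11/6*M * infsum (\<lambda>j. (rb a j)\<^sup>2) UNIV + M/2 * infsum (\<lambda>j. (re a j)\<^sup>2) UNIV"
    unfolding G_def
    by (simp only: infsum_add[OF summable_on_cmult_right[OF Sb] summable_on_cmult_right[OF Se]]
      infsum_cmult_right')
  finally show ?thesis unfolding F_def .
qed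

theorem lemma10:
  fixes dx \<gamma> :: real and a :: "int \<Rightarrow> real"
  assumes "dx > 0" and "in_l2d a" and "0 \<le> \<gamma>" and "\<gamma> < 1/2"
  shows "inner_d dx (Dp dx (Dp dx (Dm dx a))) (Dc dx (\<lambda>j. (a j)\<^sup>2 / 2))
     \<le> (dx powr (1/2 - \<gamma>) + norm_linf a + 9 * (norm_linf a)\<^sup>2 * dx powr (\<gamma> - 1/2)) / 2
          * (norm_l2d dx (Dp dx (Dm dx a)))\<^sup>2
       + norm_linf a * (norm_l2d dx (Dp dx (Dc dx a)))\<^sup>2"
proof -
  define M where "M = norm_linf a"
  define S where "S = infsum (\<lambda>j. (a j)\<^sup>2) UNIV"
  have bdd: "bdd_above (range (\<lambda>j. \<bar>a j\<bar>))"
    using l2_bound[OF assms(2)] by (auto intro!: bdd_aboveI[where M="sqrt (infsum (\<lambda>j. (a j)\<^sup>2) UNIV)"])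
  have bnd: "\<bar>a k\<bar> \<le> M" for k
    unfolding M_def norm_linf_def by (rule cSUP_upper[OF _ bdd]) simp
  have M0: "0 \<le> M" using bnd[of 0] by linarith
  have dx0: "dx \<noteq> 0" using assms(1) by simp
  have E1: "Dp dx (Dp dx (Dm dx a)) = (\<lambda>j. (rb a (j + 1) - rb a j) / dx^3)"
    by (rule ext) (simp add: Dp_def Dm_def rb_def field_simps dx0 power3_eq_cube)
  have E2: "Dc dx (\<lambda>j. (a j)\<^sup>2 / 2) = (\<lambda>j. rc a j / dx)"
    by (rule ext) (simp add: Dc_def Dp_def Dm_def rc_def field_simps dx0)
  have E3: "Dp dx (Dm dx a) = (\<lambda>j. rb a j / dx^2)"
    by (rule ext) (simp add: Dp_def Dm_def rb_def field_simps dx0 power2_eq_square)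
  have E4: "Dp dx (Dc dx a) = (\<lambda>j. re a j / dx^2)"
    by (rule ext) (simp add: Dc_def Dp_def Dm_def re_def field_simps dx0 power2_eq_square)
  define SF where "SF = infsum (\<lambda>j. (rb a (j + 1) - rb a j) * rc a j) UNIV"
  define Sb where "Sb = infsum (\<lambda>j. (rb a j)\<^sup>2) UNIV"
  define Se where "Se = infsum (\<lambda>j. (re a j)\<^sup>2) UNIV"
  have K: "SF \<le> 11/6*M*Sb + M/2*Se"
    unfolding SF_def Sb_def Se_def by (rule key[OF assms(2) bnd])
  have Sb0: "Sb \<ge> 0" unfolding Sb_def by (rule infsum_nonneg) simp
  have Se0: "Se \<ge> 0" unfolding Se_def by (rule infsum_nonneg) simp
  define w where "w = dx / dx^4"
  have w0: "w > 0" unfolding w_def using assms(1) by simp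
  have L: "inner_d dx (Dp dx (Dp dx (Dm dx a))) (Dc dx (\<lambda>j. (a j)\<^sup>2 / 2)) = w * SF"
  proof -
    have "(\<lambda>j. (rb a (j + 1) - rb a j) / dx^3 * (rc a j / dx))
        = (\<lambda>j. inverse (dx^4) * ((rb a (j + 1) - rb a j) * rc a j))"
      by (rule ext) (simp add: field_simps dx0 power_def)
    then show ?thesis unfolding inner_d_def E1 E2 SF_def w_def
      by (simp only: infsum_cmult_right') (simp add: field_simps)
  qed
  have Rb: "(norm_l2d dx (Dp dx (Dm dx a)))\<^sup>2 = w * Sb"
  proof -
    have "(\<lambda>j. rb a j / dx^2 * (rb a j / dx^2)) = (\<lambda>j. inverse (dx^4) * (rb a j)\<^sup>2)"
      by (rule ext) (simp add: field_simps dx0 power_def)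
    then have "inner_d dx (Dp dx (Dm dx a)) (Dp dx (Dm dx a)) = w * Sb"
      unfolding inner_d_def E3 Sb_def w_def
      by (simp only: infsum_cmult_right') (simp add: field_simps)
    moreover have "w * Sb \<ge> 0" using w0 Sb0 by simp
    ultimately show ?thesis unfolding norm_l2d_def by simp
  qed
  have Re: "(norm_l2d dx (Dp dx (Dc dx a)))\<^sup>2 = w * Se"
  proof -
    have "(\<lambda>j. re a j / dx^2 * (re a j / dx^2)) = (\<lambda>j. inverse (dx^4) * (re a j)\<^sup>2)"
      by (rule ext) (simp add: field_simps dx0 power_def)
    then have "inner_d dx (Dp dx (Dc dx a)) (Dp dx (Dc dx a)) = w * Se"
      unfolding inner_d_def E4 Se_def w_def
      by (simp only: infsum_cmult_right') (simp add: field_simps)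
    moreover have "w * Se \<ge> 0" using w0 Se0 by simp
    ultimately show ?thesis unfolding norm_l2d_def by simp
  qed
  define t where "t = dx powr (1/2 - \<gamma>)"
  have t0: "t > 0" unfolding t_def using assms(1) by simp
  have tinv: "dx powr (\<gamma> - 1/2) = inverse t"
    unfolding t_def using powr_minus[of dx "1/2 - \<gamma>"] by simp
  have "6*M - t \<le> 9 * M\<^sup>2 * inverse t"
  proof -
    have "(6*M - t) * t \<le> 9 * M\<^sup>2"
      using zero_le_power2[of "t - 3*M"] by (simp add: power2_eq_square algebra_simps)
    then show ?thesis using t0 by (simp add: field_simps)
  qed
  define X where "X = 9 * M\<^sup>2 * inverse t"
  have coef: "2*M \<le> (t + M + X) / 2" using M0 \<open>6*M - t \<le> 9 * M\<^sup>2 * inverse t\<close>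
    unfolding X_def[symmetric] by argo
  have "w * SF \<le> w * (11/6*M*Sb + M/2*Se)" using K w0 by (simp add: mult_left_mono)
  also have "\<dots> \<le> w * ((t + M + X) / 2 * Sb + M * Se)"
  proof (rule mult_left_mono[OF _ less_imp_le[OF w0]])
    have "11/6*M*Sb \<le> (t + M + X) / 2 * Sb"
      by (rule mult_right_mono[OF _ Sb0]) (use coef M0 in argo)
    moreover have "M/2*Se \<le> M * Se" using M0 Se0 by (simp add: mult_right_mono)
    ultimately show "11/6*M*Sb + M/2*Se \<le> (t + M + X) / 2 * Sb + M * Se"
      by argo
  qed
  finally show ?thesis
    unfolding L Rb Re tinv t_def[symmetric] M_def[symmetric] X_def by (simp add: algebra_simps)
qed

end
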